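(* Let $m\in\mathbb{N}$ and $\mathbb{E}_m=\mathbb{E}^{\otimes_{\mathbb{R}}m}$. There exists an ordering $Q_m$ on the ring $\mathbb{E}_m$ (i.e. $\mathbb{E}_m=Q_m\sqcup\{0\}\sqcup(-Q_m)$, $Q_m+Q_m\subset Q_m$, $Q_mQ_m\subset Q_m$) such that $Q^{\otimes_{\mathbb{R}}m}\subseteq Q_m$, i.e. every simple tensor $u_1\otimes\cdots\otimes u_m$ with all $u_i\in Q$ lies in $Q_m$.
   Context: $\mathbb{E}=\bigcup_{n\geq1}\mathbb{R}((t^{1/n}))$ is the field of Puiseux series over $\mathbb{R}$. For $f\in\mathbb{E}\setminus\{0\}$ let $\mathfrak{c}(f)$ be the coefficient of its nonzero term of smallest $t$-exponent, and $Q=\{f\in\mathbb{E}:\mathfrak{c}(f)>0\}$ (an ordering of $\mathbb{E}$). Tensor products are over $\mathbb{R}$. *)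

theory Defs
  imports Complex_Main
begin

text \<open>Puiseux series over the reals, represented by their coefficient functions
  (exponent in the rationals to real coefficient).\<close>

definition puiseux :: "(rat \<Rightarrow> real) set" where
  "puiseux = {f. \<exists>n::nat. n > 0 \<and> (\<exists>N::rat. \<forall>q. f q \<noteq> 0 \<longrightarrow>
      N \<le> q \<and> (\<exists>k::int. q = of_int k / of_nat n))}"

text \<open>Product of Puiseux series (Cauchy product; each sum is finite for Puiseux series).\<close>
definition pmult :: "(rat \<Rightarrow> real) \<Rightarrow> (rat \<Rightarrow> real) \<Rightarrow> rat \<Rightarrow> real" where
  "pmult f g = (\<lambda>q. \<Sum>a\<in>{a. f a \<noteq> 0 \<and> g (q - a) \<noteq> 0}. f a * g (q - a))"

definition puiseux_pos :: "(rat \<Rightarrow> real) set" where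
  "puiseux_pos = {f \<in> puiseux. \<exists>q. f q > 0 \<and> (\<forall>p<q. f p = 0)}"

text \<open>The m-fold tensor product over R is the quotient of the free real vector space on
  m-tuples of Puiseux series (finitely supported functions on lists of length m) by the
  subspace spanned by the multilinearity relations.\<close>

definition free_tensors :: "nat \<Rightarrow> ((rat \<Rightarrow> real) list \<Rightarrow> real) set" where
  "free_tensors m = {x. finite {t. x t \<noteq> 0} \<and>
      (\<forall>t. x t \<noteq> 0 \<longrightarrow> length t = m \<and> set t \<subseteq> puiseux)}"

definition simple_tensor :: "(rat \<Rightarrow> real) list \<Rightarrow> (rat \<Rightarrow> real) list \<Rightarrow> real" where
  "simple_tensor t = (\<lambda>s. if s = t then 1 else 0)"

inductive_set tensor_relations :: "nat \<Rightarrow> ((rat \<Rightarrow> real) list \<Rightarrow> real) set"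
  for m :: nat where
  zero: "(\<lambda>_. 0) \<in> tensor_relations m"
| add_rel: "\<lbrakk>length us = m; set us \<subseteq> puiseux; i < m; a \<in> puiseux; b \<in> puiseux\<rbrakk> \<Longrightarrow>
    (\<lambda>s. simple_tensor (us[i := (\<lambda>q. a q + b q)]) s - simple_tensor (us[i := a]) s
          - simple_tensor (us[i := b]) s) \<in> tensor_relations m"
| smult_rel: "\<lbrakk>length us = m; set us \<subseteq> puiseux; i < m; a \<in> puiseux\<rbrakk> \<Longrightarrow>
    (\<lambda>s. simple_tensor (us[i := (\<lambda>q. c * a q)]) s - c * simple_tensor (us[i := a]) s)
      \<in> tensor_relations m"
| add: "\<lbrakk>x \<in> tensor_relations m; y \<in> tensor_relations m\<rbrakk> \<Longrightarrow>
    (\<lambda>s. x s + y s) \<in> tensor_relations m"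
| scale: "x \<in> tensor_relations m \<Longrightarrow> (\<lambda>s. c * x s) \<in> tensor_relations m"

definition tensor_equiv :: "nat \<Rightarrow> ((rat \<Rightarrow> real) list \<Rightarrow> real) \<Rightarrow> ((rat \<Rightarrow> real) list \<Rightarrow> real) \<Rightarrow> bool" where
  "tensor_equiv m x y \<longleftrightarrow> (\<lambda>s. x s - y s) \<in> tensor_relations m"

text \<open>Ring multiplication of E_m on representatives:
  (u1 x ... x um)(v1 x ... x vm) = (u1 v1) x ... x (um vm), extended bilinearly.\<close>
definition tensor_mult :: "((rat \<Rightarrow> real) list \<Rightarrow> real) \<Rightarrow> ((rat \<Rightarrow> real) list \<Rightarrow> real) \<Rightarrow> (rat \<Rightarrow> real) list \<Rightarrow> real" where
  "tensor_mult x y = (\<lambda>s. \<Sum>(t, u)\<in>{(t, u). x t \<noteq> 0 \<and> y u \<noteq> 0 \<and> map2 pmult t u = s}. x t * y u)"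

end

theory Submission
  imports Defs
begin

lemma finite_grid:
  assumes "n > 0"
  shows "finite {q::rat. M \<le> q \<and> q \<le> U \<and> (\<exists>k::int. q = of_int k / of_nat n)}"
proof -
  have "{q::rat. M \<le> q \<and> q \<le> U \<and> (\<exists>k::int. q = of_int k / of_nat n)}
    \<subseteq> (\<lambda>k. of_int k / of_nat n) ` {\<lceil>M * of_nat n\<rceil>..\<lfloor>U * of_nat n\<rfloor>}"
  proof
    fix q assume "q \<in> {q::rat. M \<le> q \<and> q \<le> U \<and> (\<exists>k::int. q = of_int k / of_nat n)}"
    then obtain k :: int where q: "q = of_int k / of_nat n" "M \<le> q" "q \<le> U" by auto
    have np: "(of_nat n :: rat) > 0" using assms by simp
    have kq: "of_int k = q * of_nat n" using q np by simp
    have "M * of_nat n \<le> q * of_nat n" using q np by (intro mult_right_mono) auto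
    hence "\<lceil>M * of_nat n\<rceil> \<le> k" using kq by (simp add: ceiling_le_iff)
    moreover have "q * of_nat n \<le> U * of_nat n" using q np by (intro mult_right_mono) auto
    hence "k \<le> \<lfloor>U * of_nat n\<rfloor>" using kq by (simp add: le_floor_iff)
    ultimately show "q \<in> (\<lambda>k. of_int k / of_nat n) ` {\<lceil>M * of_nat n\<rceil>..\<lfloor>U * of_nat n\<rfloor>}"
      using q by auto
  qed
  thus ?thesis by (rule finite_subset) simp
qed

lemma puiseux_common:
  assumes "finite F" "F \<subseteq> puiseux"
  shows "\<exists>n>0. \<exists>M. \<forall>f\<in>F. \<forall>q. f q \<noteq> 0 \<longrightarrow> M \<le> q \<and> (\<exists>k::int. q = of_int k / of_nat n)"
  using assms
proof (induction F rule: finite_induct)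
  case empty
  then show ?case by (intro exI[of _ "1::nat"]) auto
next
  case (insert f F)
  then obtain n2 M2 where n2: "n2 > 0" and h2: "\<forall>g\<in>F. \<forall>q. g q \<noteq> 0 \<longrightarrow> M2 \<le> q \<and> (\<exists>k::int. q = of_int k / of_nat n2)"
    by auto
  from insert have "f \<in> puiseux" by auto
  then obtain n1 M1 where n1: "n1 > 0" and h1: "\<forall>q. f q \<noteq> 0 \<longrightarrow> M1 \<le> q \<and> (\<exists>k::int. q = of_int k / of_nat n1)"
    unfolding puiseux_def by auto
  have c1: "of_int k / of_nat n1 = (of_int (k * int n2) / of_nat (n1 * n2) :: rat)" for k
    using n1 n2 by (simp add: field_simps)
  have c2: "of_int k / of_nat n2 = (of_int (k * int n1) / of_nat (n1 * n2) :: rat)" for k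
    using n1 n2 by (simp add: field_simps)
  have "\<forall>g\<in>insert f F. \<forall>q. g q \<noteq> 0 \<longrightarrow> min M1 M2 \<le> q \<and> (\<exists>k::int. q = of_int k / of_nat (n1 * n2))"
  proof (intro ballI allI impI)
    fix g q assume g: "g \<in> insert f F" and gq: "g q \<noteq> 0"
    show "min M1 M2 \<le> q \<and> (\<exists>k::int. q = of_int k / of_nat (n1 * n2))"
    proof (cases "g = f")
      case True
      with h1 gq obtain k where k: "M1 \<le> q" "q = of_int k / of_nat n1" by auto
      have e: "q = of_int (k * int n2) / of_nat (n1 * n2)" using k(2) c1[of k] by metis
      show ?thesis proof (intro conjI)
        show "min M1 M2 \<le> q" using k(1) by simp
        show "\<exists>k::int. q = of_int k / of_nat (n1 * n2)" using e by blast
      qed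
    next
      case False
      with g h2 gq obtain k where k: "M2 \<le> q" "q = of_int k / of_nat n2" by auto
      have e: "q = of_int (k * int n1) / of_nat (n1 * n2)" using k(2) c2[of k] by metis
      show ?thesis proof (intro conjI)
        show "min M1 M2 \<le> q" using k(1) by simp
        show "\<exists>k::int. q = of_int k / of_nat (n1 * n2)" using e by blast
      qed
    qed
  qed
  moreover have "n1 * n2 > 0" using n1 n2 by simp
  ultimately show ?case by blast
qed

lemma puiseuxI:
  assumes "n > 0" "\<And>q. f q \<noteq> 0 \<Longrightarrow> M \<le> q \<and> (\<exists>k::int. q = of_int k / of_nat n)"
  shows "f \<in> puiseux"
  using assms unfolding puiseux_def by blast

lemma puiseux_two:
  assumes "a \<in> puiseux" "b \<in> puiseux"
  obtains n M where "n > 0" "\<And>q. a q \<noteq> 0 \<Longrightarrow> M \<le> q \<and> (\<exists>k::int. q = of_int k / of_nat n)"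
    "\<And>q. b q \<noteq> 0 \<Longrightarrow> M \<le> q \<and> (\<exists>k::int. q = of_int k / of_nat n)"
proof -
  from puiseux_common[of "{a,b}"] assms obtain n M where "n > 0"
    "\<forall>f\<in>{a,b}. \<forall>q. f q \<noteq> 0 \<longrightarrow> M \<le> q \<and> (\<exists>k::int. q = of_int k / of_nat n)" by auto
  then show thesis using that by auto
qed

lemma puiseux_add: "a \<in> puiseux \<Longrightarrow> b \<in> puiseux \<Longrightarrow> (\<lambda>q. a q + b q) \<in> puiseux"
proof -
  assume "a \<in> puiseux" "b \<in> puiseux"
  then obtain n M where "n > 0" "\<And>q. a q \<noteq> 0 \<Longrightarrow> M \<le> q \<and> (\<exists>k::int. q = of_int k / of_nat n)"
    "\<And>q. b q \<noteq> 0 \<Longrightarrow> M \<le> q \<and> (\<exists>k::int. q = of_int k / of_nat n)" using puiseux_two by metis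
  then show ?thesis by (intro puiseuxI[of n _ M]) force+
qed

lemma puiseux_smult: "a \<in> puiseux \<Longrightarrow> (\<lambda>q. c * a q) \<in> puiseux"
  unfolding puiseux_def by auto

lemma puiseux_zero: "(\<lambda>q. 0) \<in> puiseux"
  by (rule puiseuxI[of 1]) auto

lemma puiseux_sum: "finite B \<Longrightarrow> B \<subseteq> puiseux \<Longrightarrow> (\<lambda>q. \<Sum>a\<in>B. c a * a q) \<in> puiseux"
proof (induction B rule: finite_induct)
  case empty
  then show ?case using puiseux_zero by simp
next
  case (insert x F)
  then show ?case using puiseux_add[OF puiseux_smult[of x "c x"], of "\<lambda>q. \<Sum>a\<in>F. c a * a q"] by simp
qed

lemma pm_finite:
  assumes "f \<in> puiseux" "g \<in> puiseux"
  shows "finite {a. f a \<noteq> 0 \<and> g (q - a) \<noteq> 0}"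
proof -
  obtain n M where n: "n > 0" and hf: "\<And>q. f q \<noteq> 0 \<Longrightarrow> M \<le> q \<and> (\<exists>k::int. q = of_int k / of_nat n)"
    and hg: "\<And>q. g q \<noteq> 0 \<Longrightarrow> M \<le> q \<and> (\<exists>k::int. q = of_int k / of_nat n)"
    using puiseux_two[OF assms] by metis
  have "{a. f a \<noteq> 0 \<and> g (q - a) \<noteq> 0} \<subseteq> {a. M \<le> a \<and> a \<le> q - M \<and> (\<exists>k::int. a = of_int k / of_nat n)}"
    using hf hg by force
  thus ?thesis using finite_grid[OF n] finite_subset by blast
qed

lemma puiseux_pmult:
  assumes "f \<in> puiseux" "g \<in> puiseux"
  shows "pmult f g \<in> puiseux"
proof -
  obtain n M where n: "n > 0" and hf: "\<And>q. f q \<noteq> 0 \<Longrightarrow> M \<le> q \<and> (\<exists>k::int. q = of_int k / of_nat n)"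
    and hg: "\<And>q. g q \<noteq> 0 \<Longrightarrow> M \<le> q \<and> (\<exists>k::int. q = of_int k / of_nat n)"
    using puiseux_two[OF assms] by metis
  show ?thesis
  proof (rule puiseuxI[of n _ "M + M"])
    show "n > 0" by fact
    fix q assume "pmult f g q \<noteq> 0"
    then have "{a. f a \<noteq> 0 \<and> g (q - a) \<noteq> 0} \<noteq> {}" unfolding pmult_def by (metis sum.empty)
    then obtain a where a: "f a \<noteq> 0" "g (q - a) \<noteq> 0" by auto
    from hf[OF a(1)] obtain k where k: "M \<le> a" "a = of_int k / of_nat n" by auto
    from hg[OF a(2)] obtain k' where k': "M \<le> q - a" "q - a = of_int k' / of_nat n" by auto
    have e: "q = of_int (k + k') / of_nat n" using k k' by (simp add: add_divide_distrib)
    show "M + M \<le> q \<and> (\<exists>k::int. q = of_int k / of_nat n)"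
    proof (intro conjI)
      show "M + M \<le> q" using k(1) k'(1) by simp
      show "\<exists>k::int. q = of_int k / of_nat n" using e by blast
    qed
  qed
qed

fun lexl :: "rat list \<Rightarrow> rat list \<Rightarrow> bool" where
  "lexl (a # as) (b # bs) = (a < b \<or> (a = b \<and> lexl as bs))"
| "lexl _ _ = False"

lemma lexl_irrefl: "\<not> lexl p p"
  by (induction p) auto

lemma lexl_trans: "lexl p q \<Longrightarrow> lexl q r \<Longrightarrow> lexl p r"
proof (induction p arbitrary: q r)
  case Nil then show ?case by simp
next
  case (Cons a p)
  then show ?case by (cases q; cases r) auto
qed

lemma lexl_total: "length p = length q \<Longrightarrow> p \<noteq> q \<Longrightarrow> lexl p q \<or> lexl q p"
proof (induction p arbitrary: q)
  case Nil then show ?case by simp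
next
  case (Cons a p)
  then obtain b q' where q: "q = b # q'" by (cases q) auto
  show ?case
  proof (cases "a = b")
    case True
    then have "p \<noteq> q'" "length p = length q'" using Cons.prems q by auto
    then have "lexl p q' \<or> lexl q' p" using Cons.IH by blast
    then show ?thesis using q True by auto
  next
    case False
    then have "a < b \<or> b < a" by auto
    then show ?thesis using q by auto
  qed
qed

lemma lexl_sub1: "length p = length c \<Longrightarrow> length q = length c \<Longrightarrow> lexl p q \<Longrightarrow>
  lexl (map2 (-) p c) (map2 (-) q c)"
proof (induction c arbitrary: p q)
  case Nil then show ?case by simp
next
  case (Cons a c)
  then show ?case by (cases p; cases q) auto
qed

lemma lexl_sub2: "length p = length c \<Longrightarrow> length q = length c \<Longrightarrow> lexl p q \<Longrightarrow>
  lexl (map2 (-) c q) (map2 (-) c p)"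
proof (induction c arbitrary: p q)
  case Nil then show ?case by simp
next
  case (Cons a c)
  then show ?case by (cases p; cases q) auto
qed

lemma add_sub_list: "length a = length b \<Longrightarrow> map2 (-) (map2 (+) a b) a = (b::rat list)"
proof (induction a arbitrary: b)
  case Nil then show ?case by simp
next
  case (Cons x a)
  then show ?case by (cases b) auto
qed

lemma rat_grid_min:
  fixes T :: "rat set"
  assumes n: "n > 0" and ne: "T \<noteq> {}" and sub: "T \<subseteq> {q. M \<le> q \<and> (\<exists>k::int. q = of_int k / of_nat n)}"
  shows "\<exists>w\<in>T. \<forall>w'\<in>T. w \<le> w'"
proof -
  obtain q0 where q0: "q0 \<in> T" using ne by auto
  let ?T0 = "{q\<in>T. q \<le> q0}"
  have "?T0 \<subseteq> {q::rat. M \<le> q \<and> q \<le> q0 \<and> (\<exists>k::int. q = of_int k / of_nat n)}" using sub by auto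
  hence fin: "finite ?T0" using finite_grid[OF n] finite_subset by blast
  have ne0: "?T0 \<noteq> {}" using q0 by auto
  show ?thesis
  proof (intro bexI ballI)
    show "Min ?T0 \<in> T" using Min_in[OF fin ne0] by auto
    fix w' assume w': "w' \<in> T"
    show "Min ?T0 \<le> w'"
    proof (cases "w' \<le> q0")
      case True then show ?thesis using fin w' by (intro Min_le) auto
    next
      case False
      have "Min ?T0 \<le> q0" using Min_in[OF fin ne0] by auto
      then show ?thesis using False by simp
    qed
  qed
qed

lemma lex_min:
  assumes n: "n > 0"
  shows "S \<noteq> {} \<Longrightarrow> S \<subseteq> {e. length e = m \<and> (\<forall>q\<in>set e. M \<le> q \<and> (\<exists>k::int. q = of_int k / of_nat n))}
    \<Longrightarrow> \<exists>e\<in>S. \<forall>e'\<in>S. e' \<noteq> e \<longrightarrow> lexl e e'"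
proof (induction m arbitrary: S)
  case 0
  then have "S = {[]}" by auto
  then show ?case by auto
next
  case (Suc m)
  have Sp: "\<And>e. e \<in> S \<Longrightarrow> length e = Suc m \<and> (\<forall>q\<in>set e. M \<le> q \<and> (\<exists>k::int. q = of_int k / of_nat n))"
    using Suc.prems(2) by blast
  let ?H = "hd ` S"
  have "?H \<noteq> {}" using Suc.prems by auto
  moreover have "?H \<subseteq> {q. M \<le> q \<and> (\<exists>k::int. q = of_int k / of_nat n)}"
  proof
    fix h assume "h \<in> ?H"
    then obtain e where e: "e \<in> S" "h = hd e" by auto
    then have "length e = Suc m" using Sp by blast
    then have "h \<in> set e" using e by (cases e) auto
    then show "h \<in> {q. M \<le> q \<and> (\<exists>k::int. q = of_int k / of_nat n)}" using e Sp by blast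
  qed
  ultimately have "\<exists>w\<in>?H. \<forall>w'\<in>?H. w \<le> w'" by (rule rat_grid_min[OF n])
  then obtain h where h: "h \<in> ?H" "\<forall>w'\<in>?H. h \<le> w'" by blast
  let ?S' = "{t. h # t \<in> S}"
  have "?S' \<noteq> {}"
  proof -
    obtain e where e: "e \<in> S" "h = hd e" using h by auto
    then have "length e = Suc m" using Sp by blast
    then have "e = h # tl e" using e by (cases e) auto
    then have "h # tl e \<in> S" using e by metis
    then have "tl e \<in> ?S'" by simp
    then show ?thesis by (metis empty_iff)
  qed
  moreover have "?S' \<subseteq> {e. length e = m \<and> (\<forall>q\<in>set e. M \<le> q \<and> (\<exists>k::int. q = of_int k / of_nat n))}"
  proof
    fix t assume "t \<in> ?S'"
    hence "h # t \<in> S" by simp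
    hence "h # t \<in> {e. length e = Suc m \<and> (\<forall>q\<in>set e. M \<le> q \<and> (\<exists>k::int. q = of_int k / of_nat n))}"
      using Suc.prems(2) by blast
    thus "t \<in> {e. length e = m \<and> (\<forall>q\<in>set e. M \<le> q \<and> (\<exists>k::int. q = of_int k / of_nat n))}" by simp
  qed
  ultimately have "\<exists>e\<in>?S'. \<forall>e'\<in>?S'. e' \<noteq> e \<longrightarrow> lexl e e'" by (rule Suc.IH)
  then obtain t0 where t0: "t0 \<in> ?S'" "\<forall>e'\<in>?S'. e' \<noteq> t0 \<longrightarrow> lexl t0 e'" by blast
  show ?case
  proof (intro bexI ballI impI)
    show "h # t0 \<in> S" using t0 by auto
    fix e' assume e': "e' \<in> S" "e' \<noteq> h # t0"
    then have "length e' = Suc m" using Sp by blast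
    then obtain h' t' where et: "e' = h' # t'" by (cases e') auto
    have "h' \<in> ?H" using e' et by (metis image_eqI list.sel(1))
    hence "h \<le> h'" using h(2) by blast
    show "lexl (h # t0) e'"
    proof (cases "h = h'")
      case True
      then have "t' \<in> ?S'" "t' \<noteq> t0" using e' et by auto
      then have "lexl t0 t'" using t0 by blast
      then show ?thesis using et True by simp
    next
      case False
      then show ?thesis using \<open>h \<le> h'\<close> et by auto
    qed
  qed
qed

fun ev :: "(rat \<Rightarrow> real) list \<Rightarrow> rat list \<Rightarrow> real" where
  "ev (f # fs) (q # qs) = f q * ev fs qs"
| "ev _ _ = 1"

definition spt :: "('a \<Rightarrow> real) \<Rightarrow> 'a set" where "spt x = {t. x t \<noteq> 0}"

definition phi :: "((rat \<Rightarrow> real) list \<Rightarrow> real) \<Rightarrow> rat list \<Rightarrow> real" where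
  "phi x e = (\<Sum>t\<in>spt x. x t * ev t e)"

lemma ft_iff: "x \<in> free_tensors m \<longleftrightarrow> finite (spt x) \<and> (\<forall>t\<in>spt x. length t = m \<and> set t \<subseteq> puiseux)"
  by (auto simp: free_tensors_def spt_def)

lemma phi_superset: "finite K \<Longrightarrow> spt x \<subseteq> K \<Longrightarrow> phi x e = (\<Sum>t\<in>K. x t * ev t e)"
  unfolding phi_def by (rule sum.mono_neutral_left) (auto simp: spt_def)

lemma ft_add: "x \<in> free_tensors m \<Longrightarrow> y \<in> free_tensors m \<Longrightarrow> (\<lambda>s. x s + y s) \<in> free_tensors m"
proof -
  assume x: "x \<in> free_tensors m" and y: "y \<in> free_tensors m"
  have sub: "spt (\<lambda>s. x s + y s) \<subseteq> spt x \<union> spt y" by (auto simp: spt_def)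
  have "finite (spt (\<lambda>s. x s + y s))"
    using x y sub unfolding ft_iff by (meson finite_Un finite_subset)
  moreover have "\<forall>t\<in>spt (\<lambda>s. x s + y s). length t = m \<and> set t \<subseteq> puiseux"
  proof
    fix t assume "t \<in> spt (\<lambda>s. x s + y s)"
    then have "t \<in> spt x \<or> t \<in> spt y" using sub by blast
    then show "length t = m \<and> set t \<subseteq> puiseux" using x y unfolding ft_iff by blast
  qed
  ultimately show ?thesis unfolding ft_iff by blast
qed

lemma ft_scale: "x \<in> free_tensors m \<Longrightarrow> (\<lambda>s. c * x s) \<in> free_tensors m"
proof -
  assume x: "x \<in> free_tensors m"
  have sub: "spt (\<lambda>s. c * x s) \<subseteq> spt x" by (auto simp: spt_def)
  have "finite (spt (\<lambda>s. c * x s))"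
    using x sub unfolding ft_iff by (meson finite_subset)
  moreover have "\<forall>t\<in>spt (\<lambda>s. c * x s). length t = m \<and> set t \<subseteq> puiseux"
    using x sub unfolding ft_iff by blast
  ultimately show ?thesis unfolding ft_iff by blast
qed

lemma ft_neg: "x \<in> free_tensors m \<Longrightarrow> (\<lambda>s. - x s) \<in> free_tensors m"
  using ft_scale[of x m "-1"] by simp

lemma ft_diff: "x \<in> free_tensors m \<Longrightarrow> y \<in> free_tensors m \<Longrightarrow> (\<lambda>s. x s - y s) \<in> free_tensors m"
  using ft_add[OF _ ft_neg[of y]] by simp

lemma ft_zero: "(\<lambda>s. 0) \<in> free_tensors m"
  by (simp add: ft_iff spt_def)

lemma ft_simple: "length t = m \<Longrightarrow> set t \<subseteq> puiseux \<Longrightarrow> simple_tensor t \<in> free_tensors m"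
proof -
  assume "length t = m" "set t \<subseteq> puiseux"
  moreover have "spt (simple_tensor t) = {t}" by (auto simp: spt_def simple_tensor_def)
  ultimately show ?thesis unfolding ft_iff by auto
qed

lemma ft_sum: "finite I \<Longrightarrow> (\<forall>i\<in>I. f i \<in> free_tensors m) \<Longrightarrow> (\<lambda>s. \<Sum>i\<in>I. f i s) \<in> free_tensors m"
proof (induction I rule: finite_induct)
  case empty
  then show ?case using ft_zero by simp
next
  case (insert a F)
  then show ?case using ft_add[of "f a" m "\<lambda>s. \<Sum>i\<in>F. f i s"] by simp
qed

lemma phi_add: "x \<in> free_tensors m \<Longrightarrow> y \<in> free_tensors m \<Longrightarrow>
  phi (\<lambda>s. x s + y s) e = phi x e + phi y e"
proof -
  assume x: "x \<in> free_tensors m" and y: "y \<in> free_tensors m"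
  let ?K = "spt x \<union> spt y"
  have fin: "finite ?K" using x y by (simp add: ft_iff)
  have "phi (\<lambda>s. x s + y s) e = (\<Sum>t\<in>?K. (x t + y t) * ev t e)"
    by (rule phi_superset[OF fin]) (auto simp: spt_def)
  also have "\<dots> = (\<Sum>t\<in>?K. x t * ev t e) + (\<Sum>t\<in>?K. y t * ev t e)"
    by (simp add: distrib_right sum.distrib)
  also have "\<dots> = phi x e + phi y e"
    using phi_superset[OF fin, of x] phi_superset[OF fin, of y] by auto
  finally show ?thesis .
qed

lemma phi_scale: "x \<in> free_tensors m \<Longrightarrow> phi (\<lambda>s. c * x s) e = c * phi x e"
proof -
  assume x: "x \<in> free_tensors m"
  have fin: "finite (spt x)" using x by (simp add: ft_iff)
  have "phi (\<lambda>s. c * x s) e = (\<Sum>t\<in>spt x. (c * x t) * ev t e)"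
    by (rule phi_superset[OF fin]) (auto simp: spt_def)
  also have "\<dots> = c * phi x e" by (simp add: phi_def sum_distrib_left mult.assoc)
  finally show ?thesis .
qed

lemma phi_neg: "x \<in> free_tensors m \<Longrightarrow> phi (\<lambda>s. - x s) e = - phi x e"
  using phi_scale[of x m "-1"] by simp

lemma phi_diff: "x \<in> free_tensors m \<Longrightarrow> y \<in> free_tensors m \<Longrightarrow>
  phi (\<lambda>s. x s - y s) e = phi x e - phi y e"
proof -
  assume x: "x \<in> free_tensors m" and y: "y \<in> free_tensors m"
  have "phi (\<lambda>s. x s + (\<lambda>s. - y s) s) e = phi x e + phi (\<lambda>s. - y s) e"
    by (rule phi_add[OF x ft_neg[OF y]])
  then show ?thesis by (simp add: phi_neg[OF y])
qed

lemma phi_zero: "phi (\<lambda>s. 0) e = 0"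
  by (simp add: phi_def spt_def)

lemma phi_sum: "finite I \<Longrightarrow> (\<forall>i\<in>I. f i \<in> free_tensors m) \<Longrightarrow>
  phi (\<lambda>s. \<Sum>i\<in>I. f i s) e = (\<Sum>i\<in>I. phi (f i) e)"
proof (induction I rule: finite_induct)
  case empty
  then show ?case using phi_zero by simp
next
  case (insert a F)
  have "phi (\<lambda>s. \<Sum>i\<in>insert a F. f i s) e = phi (\<lambda>s. f a s + (\<lambda>s. \<Sum>i\<in>F. f i s) s) e"
    using insert by simp
  also have "\<dots> = phi (f a) e + phi (\<lambda>s. \<Sum>i\<in>F. f i s) e"
    using insert by (intro phi_add[of _ m] ft_sum) auto
  finally show ?case using insert by simp
qed

lemma phi_simple: "phi (simple_tensor t) e = ev t e"
proof -
  have "spt (simple_tensor t) = {t}" by (auto simp: spt_def simple_tensor_def)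
  then show ?thesis by (simp add: phi_def simple_tensor_def)
qed

lemma ev_upd_add: "length us = length e \<Longrightarrow> i < length us \<Longrightarrow>
  ev (us[i := (\<lambda>q. a q + b q)]) e = ev (us[i := a]) e + ev (us[i := b]) e"
proof (induction us arbitrary: i e)
  case Nil then show ?case by simp
next
  case (Cons f us)
  then obtain q e' where e: "e = q # e'" by (cases e) auto
  show ?case
  proof (cases i)
    case 0 then show ?thesis using e by (simp add: algebra_simps)
  next
    case (Suc j) then show ?thesis using e Cons by (simp add: algebra_simps)
  qed
qed

lemma ev_upd_smult: "length us = length e \<Longrightarrow> i < length us \<Longrightarrow>
  ev (us[i := (\<lambda>q. c * a q)]) e = c * ev (us[i := a]) e"
proof (induction us arbitrary: i e)
  case Nil then show ?case by simp
next
  case (Cons f us)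
  then obtain q e' where e: "e = q # e'" by (cases e) auto
  show ?case
  proof (cases i)
    case 0 then show ?thesis using e by (simp add: algebra_simps)
  next
    case (Suc j) then show ?thesis using e Cons by (simp add: algebra_simps)
  qed
qed

lemma upd_puiseux: "set us \<subseteq> puiseux \<Longrightarrow> a \<in> puiseux \<Longrightarrow> set (us[i := a]) \<subseteq> puiseux"
  using set_update_subset_insert[of us i a] by blast

lemma rel_phi: "x \<in> tensor_relations m \<Longrightarrow> x \<in> free_tensors m \<and> (\<forall>e. length e = m \<longrightarrow> phi x e = 0)"
proof (induction rule: tensor_relations.induct)
  case zero
  then show ?case using ft_zero phi_zero by auto
next
  case (add_rel us i a b)
  let ?A = "us[i := (\<lambda>q. a q + b q)]" and ?B = "us[i := a]" and ?C = "us[i := b]"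
  have fA: "simple_tensor ?A \<in> free_tensors m"
    using add_rel by (intro ft_simple upd_puiseux puiseux_add) auto
  have fB: "simple_tensor ?B \<in> free_tensors m"
    using add_rel by (intro ft_simple upd_puiseux) auto
  have fC: "simple_tensor ?C \<in> free_tensors m"
    using add_rel by (intro ft_simple upd_puiseux) auto
  have fAB: "(\<lambda>s. simple_tensor ?A s - simple_tensor ?B s) \<in> free_tensors m"
    using fA fB by (rule ft_diff)
  have eq: "(\<lambda>s. simple_tensor ?A s - simple_tensor ?B s - simple_tensor ?C s)
     = (\<lambda>s. (\<lambda>s. simple_tensor ?A s - simple_tensor ?B s) s - simple_tensor ?C s)" by simp
  show ?case
  proof
    show "(\<lambda>s. simple_tensor ?A s - simple_tensor ?B s - simple_tensor ?C s) \<in> free_tensors m"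
      using eq ft_diff[OF fAB fC] by simp
    show "\<forall>e. length e = m \<longrightarrow> phi (\<lambda>s. simple_tensor ?A s - simple_tensor ?B s - simple_tensor ?C s) e = 0"
    proof (intro allI impI)
      fix e :: "rat list" assume le: "length e = m"
      have "phi (\<lambda>s. simple_tensor ?A s - simple_tensor ?B s - simple_tensor ?C s) e
          = phi (\<lambda>s. simple_tensor ?A s - simple_tensor ?B s) e - phi (simple_tensor ?C) e"
        using eq phi_diff[OF fAB fC] by simp
      also have "\<dots> = ev ?A e - ev ?B e - ev ?C e"
        using phi_diff[OF fA fB] phi_simple by simp
      also have "\<dots> = 0" using ev_upd_add[of us e i a b] add_rel le by simp
      finally show "phi (\<lambda>s. simple_tensor ?A s - simple_tensor ?B s - simple_tensor ?C s) e = 0" .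
    qed
  qed
next
  case (smult_rel us i a c)
  let ?A = "us[i := (\<lambda>q. c * a q)]" and ?B = "us[i := a]"
  have fA: "simple_tensor ?A \<in> free_tensors m"
    using smult_rel by (intro ft_simple upd_puiseux puiseux_smult) auto
  have fB: "simple_tensor ?B \<in> free_tensors m"
    using smult_rel by (intro ft_simple upd_puiseux) auto
  have fB': "(\<lambda>s. c * simple_tensor ?B s) \<in> free_tensors m" using fB by (rule ft_scale)
  show ?case
  proof
    show "(\<lambda>s. simple_tensor ?A s - c * simple_tensor ?B s) \<in> free_tensors m"
      using ft_diff[OF fA fB'] by simp
    show "\<forall>e. length e = m \<longrightarrow> phi (\<lambda>s. simple_tensor ?A s - c * simple_tensor ?B s) e = 0"
    proof (intro allI impI)
      fix e :: "rat list" assume le: "length e = m"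
      have "phi (\<lambda>s. simple_tensor ?A s - c * simple_tensor ?B s) e = ev ?A e - c * ev ?B e"
        using phi_diff[OF fA fB'] phi_scale[OF fB] phi_simple by simp
      also have "\<dots> = 0" using ev_upd_smult[of us e i c a] smult_rel le by simp
      finally show "phi (\<lambda>s. simple_tensor ?A s - c * simple_tensor ?B s) e = 0" .
    qed
  qed
next
  case (add x y)
  then have "(\<lambda>s. x s + y s) \<in> free_tensors m" by (intro ft_add) auto
  moreover have "\<forall>e. length e = m \<longrightarrow> phi (\<lambda>s. x s + y s) e = 0"
  proof (intro allI impI)
    fix e :: "rat list" assume "length e = m"
    then show "phi (\<lambda>s. x s + y s) e = 0" using add phi_add[of x m y e] by simp
  qed
  ultimately show ?case by blast
next
  case (scale x c)
  then have "(\<lambda>s. c * x s) \<in> free_tensors m" by (intro ft_scale) auto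
  moreover have "\<forall>e. length e = m \<longrightarrow> phi (\<lambda>s. c * x s) e = 0"
  proof (intro allI impI)
    fix e :: "rat list" assume "length e = m"
    then show "phi (\<lambda>s. c * x s) e = 0" using scale phi_scale[of x m c e] by simp
  qed
  ultimately show ?case by blast
qed

definition consT :: "(rat \<Rightarrow> real) \<Rightarrow> ((rat \<Rightarrow> real) list \<Rightarrow> real) \<Rightarrow> (rat \<Rightarrow> real) list \<Rightarrow> real" where
  "consT a y = (\<lambda>s. case s of [] \<Rightarrow> 0 | b # s' \<Rightarrow> if b = a then y s' else 0)"

lemma consT_Nil[simp]: "consT a y [] = 0" by (simp add: consT_def)
lemma consT_Cons[simp]: "consT a y (b # s) = (if b = a then y s else 0)" by (simp add: consT_def)

lemma rel_diff: "x \<in> tensor_relations m \<Longrightarrow> y \<in> tensor_relations m \<Longrightarrow> (\<lambda>s. x s - y s) \<in> tensor_relations m"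
  using tensor_relations.add[OF _ tensor_relations.scale[of y m "-1"], of x] by simp

lemma rel_sum: "finite I \<Longrightarrow> (\<forall>i\<in>I. f i \<in> tensor_relations m) \<Longrightarrow> (\<lambda>s. \<Sum>i\<in>I. f i s) \<in> tensor_relations m"
proof (induction I rule: finite_induct)
  case empty
  then show ?case using tensor_relations.zero by simp
next
  case (insert a F)
  then show ?case using tensor_relations.add[of "f a" m "\<lambda>s. \<Sum>i\<in>F. f i s"] by simp
qed

lemma rel_cons: "y \<in> tensor_relations m \<Longrightarrow> a \<in> puiseux \<Longrightarrow> consT a y \<in> tensor_relations (Suc m)"
proof (induction rule: tensor_relations.induct)
  case zero
  have "consT a (\<lambda>_. 0) = (\<lambda>_. 0)" by (rule ext) (simp add: consT_def split: list.split)
  then show ?case using tensor_relations.zero by simp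
next
  case (add_rel us i a' b')
  have "consT a (\<lambda>s. simple_tensor (us[i := (\<lambda>q. a' q + b' q)]) s - simple_tensor (us[i := a']) s
          - simple_tensor (us[i := b']) s) =
    (\<lambda>s. simple_tensor ((a # us)[Suc i := (\<lambda>q. a' q + b' q)]) s - simple_tensor ((a # us)[Suc i := a']) s
          - simple_tensor ((a # us)[Suc i := b']) s)"
    by (rule ext) (auto simp: consT_def simple_tensor_def split: list.split)
  moreover have "(\<lambda>s. simple_tensor ((a # us)[Suc i := (\<lambda>q. a' q + b' q)]) s - simple_tensor ((a # us)[Suc i := a']) s
          - simple_tensor ((a # us)[Suc i := b']) s) \<in> tensor_relations (Suc m)"
    using add_rel by (intro tensor_relations.add_rel) auto
  ultimately show ?case by simp
next
  case (smult_rel us i a' c)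
  have "consT a (\<lambda>s. simple_tensor (us[i := (\<lambda>q. c * a' q)]) s - c * simple_tensor (us[i := a']) s) =
    (\<lambda>s. simple_tensor ((a # us)[Suc i := (\<lambda>q. c * a' q)]) s - c * simple_tensor ((a # us)[Suc i := a']) s)"
    by (rule ext) (auto simp: consT_def simple_tensor_def split: list.split)
  moreover have "(\<lambda>s. simple_tensor ((a # us)[Suc i := (\<lambda>q. c * a' q)]) s - c * simple_tensor ((a # us)[Suc i := a']) s)
     \<in> tensor_relations (Suc m)"
    using smult_rel by (intro tensor_relations.smult_rel) auto
  ultimately show ?case by simp
next
  case (add x y)
  have "consT a (\<lambda>s. x s + y s) = (\<lambda>s. consT a x s + consT a y s)"
    by (rule ext) (simp add: consT_def split: list.split)
  then show ?case using add tensor_relations.add by simp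
next
  case (scale x c)
  have "consT a (\<lambda>s. c * x s) = (\<lambda>s. c * consT a x s)"
    by (rule ext) (simp add: consT_def split: list.split)
  then show ?case using scale tensor_relations.scale by simp
qed

lemma simple_comb:
  assumes t: "length t = m" "set t \<subseteq> puiseux"
  shows "finite B \<Longrightarrow> B \<subseteq> puiseux \<Longrightarrow>
    (\<lambda>s. simple_tensor ((\<lambda>q. \<Sum>a\<in>B. c a * a q) # t) s - (\<Sum>a\<in>B. c a * simple_tensor (a # t) s))
      \<in> tensor_relations (Suc m)"
proof (induction B rule: finite_induct)
  case empty
  have "(\<lambda>s. simple_tensor (((\<lambda>q. 0) # t)[0 := (\<lambda>q. 0 * (\<lambda>q. 0) q)]) s
     - 0 * simple_tensor (((\<lambda>q. 0) # t)[0 := (\<lambda>q. 0)]) s) \<in> tensor_relations (Suc m)"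
    using t puiseux_zero by (intro tensor_relations.smult_rel) auto
  then show ?case by simp
next
  case (insert b B)
  let ?S = "\<lambda>q. \<Sum>a\<in>B. c a * a q"
  have Sp: "?S \<in> puiseux" using insert by (intro puiseux_sum) auto
  have bp: "b \<in> puiseux" using insert by auto
  have r1: "(\<lambda>s. simple_tensor ((?S # t)[0 := (\<lambda>q. (\<lambda>q. c b * b q) q + ?S q)]) s
      - simple_tensor ((?S # t)[0 := (\<lambda>q. c b * b q)]) s - simple_tensor ((?S # t)[0 := ?S]) s)
     \<in> tensor_relations (Suc m)"
    using t Sp bp by (intro tensor_relations.add_rel puiseux_smult) auto
  have r2: "(\<lambda>s. simple_tensor ((b # t)[0 := (\<lambda>q. c b * b q)]) s - c b * simple_tensor ((b # t)[0 := b]) s)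
     \<in> tensor_relations (Suc m)"
    using t bp by (intro tensor_relations.smult_rel) auto
  have r3: "(\<lambda>s. simple_tensor (?S # t) s - (\<Sum>a\<in>B. c a * simple_tensor (a # t) s)) \<in> tensor_relations (Suc m)"
    using insert by auto
  have "(\<lambda>s. (\<lambda>s. (\<lambda>s. simple_tensor ((?S # t)[0 := (\<lambda>q. (\<lambda>q. c b * b q) q + ?S q)]) s
      - simple_tensor ((?S # t)[0 := (\<lambda>q. c b * b q)]) s - simple_tensor ((?S # t)[0 := ?S]) s) s +
      (\<lambda>s. simple_tensor ((b # t)[0 := (\<lambda>q. c b * b q)]) s - c b * simple_tensor ((b # t)[0 := b]) s) s) s
      + (\<lambda>s. simple_tensor (?S # t) s - (\<Sum>a\<in>B. c a * simple_tensor (a # t) s)) s) \<in> tensor_relations (Suc m)"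
    by (intro tensor_relations.add r1 r2 r3)
  moreover have "(\<lambda>s. (\<lambda>s. (\<lambda>s. simple_tensor ((?S # t)[0 := (\<lambda>q. (\<lambda>q. c b * b q) q + ?S q)]) s
      - simple_tensor ((?S # t)[0 := (\<lambda>q. c b * b q)]) s - simple_tensor ((?S # t)[0 := ?S]) s) s +
      (\<lambda>s. simple_tensor ((b # t)[0 := (\<lambda>q. c b * b q)]) s - c b * simple_tensor ((b # t)[0 := b]) s) s) s
      + (\<lambda>s. simple_tensor (?S # t) s - (\<Sum>a\<in>B. c a * simple_tensor (a # t) s)) s)
    = (\<lambda>s. simple_tensor ((\<lambda>q. \<Sum>a\<in>insert b B. c a * a q) # t) s - (\<Sum>a\<in>insert b B. c a * simple_tensor (a # t) s))"
    using insert by (simp add: algebra_simps)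
  ultimately show ?case by simp
qed

lemma consT_expand: "y \<in> free_tensors m \<Longrightarrow> consT a y = (\<lambda>s. \<Sum>t\<in>spt y. y t * simple_tensor (a # t) s)"
proof (rule ext)
  fix s
  assume y: "y \<in> free_tensors m"
  show "consT a y s = (\<Sum>t\<in>spt y. y t * simple_tensor (a # t) s)"
  proof (cases s)
    case Nil then show ?thesis by (simp add: simple_tensor_def)
  next
    case (Cons b s')
    have "(\<Sum>t\<in>spt y. y t * simple_tensor (a # t) s) = (\<Sum>t\<in>spt y. if t = s' then (if b = a then y t else 0) else 0)"
      using Cons by (intro sum.cong) (auto simp: simple_tensor_def)
    also have "\<dots> = (if s' \<in> spt y then (if b = a then y s' else 0) else 0)"
      using y by (simp add: ft_iff)
    also have "\<dots> = consT a y s" using Cons by (auto simp: spt_def)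
    finally show ?thesis by simp
  qed
qed

lemma cons_comb:
  assumes y: "y \<in> free_tensors m" and B: "finite B" "B \<subseteq> puiseux"
  shows "(\<lambda>s. consT (\<lambda>q. \<Sum>a\<in>B. c a * a q) y s - (\<Sum>a\<in>B. c a * consT a y s)) \<in> tensor_relations (Suc m)"
proof -
  let ?S = "\<lambda>q. \<Sum>a\<in>B. c a * a q"
  have fin: "finite (spt y)" using y by (simp add: ft_iff)
  have eq: "(\<lambda>s. consT ?S y s - (\<Sum>a\<in>B. c a * consT a y s)) =
    (\<lambda>s. \<Sum>t\<in>spt y. y t * (simple_tensor (?S # t) s - (\<Sum>a\<in>B. c a * simple_tensor (a # t) s)))"
  proof (rule ext)
    fix s
    have "(\<Sum>a\<in>B. c a * consT a y s) = (\<Sum>a\<in>B. \<Sum>t\<in>spt y. c a * (y t * simple_tensor (a # t) s))"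
      by (simp add: consT_expand[OF y] sum_distrib_left)
    also have "\<dots> = (\<Sum>t\<in>spt y. \<Sum>a\<in>B. c a * (y t * simple_tensor (a # t) s))"
      by (rule sum.swap)
    also have "\<dots> = (\<Sum>t\<in>spt y. y t * (\<Sum>a\<in>B. c a * simple_tensor (a # t) s))"
      by (simp add: sum_distrib_left algebra_simps)
    finally have e1: "(\<Sum>a\<in>B. c a * consT a y s) = (\<Sum>t\<in>spt y. y t * (\<Sum>a\<in>B. c a * simple_tensor (a # t) s))" .
    show "consT ?S y s - (\<Sum>a\<in>B. c a * consT a y s) =
      (\<Sum>t\<in>spt y. y t * (simple_tensor (?S # t) s - (\<Sum>a\<in>B. c a * simple_tensor (a # t) s)))"
      unfolding e1 by (simp add: consT_expand[OF y] right_diff_distrib sum_subtractf)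
  qed
  have "(\<lambda>s. \<Sum>t\<in>spt y. (\<lambda>t s. y t * (simple_tensor (?S # t) s - (\<Sum>a\<in>B. c a * simple_tensor (a # t) s))) t s)
     \<in> tensor_relations (Suc m)"
  proof (rule rel_sum[OF fin], rule ballI)
    fix t assume "t \<in> spt y"
    then have "length t = m" "set t \<subseteq> puiseux" using y by (auto simp: ft_iff)
    then show "(\<lambda>s. y t * (simple_tensor (?S # t) s - (\<Sum>a\<in>B. c a * simple_tensor (a # t) s))) \<in> tensor_relations (Suc m)"
      using simple_comb[of t m B c] B by (intro tensor_relations.scale) auto
  qed
  then show ?thesis using eq by simp
qed

lemma ft_slice: "x \<in> free_tensors (Suc m) \<Longrightarrow> (\<lambda>s. x (a # s)) \<in> free_tensors m"
proof -
  assume x: "x \<in> free_tensors (Suc m)"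
  have eq: "spt (\<lambda>s. x (a # s)) = Cons a -` spt x" by (auto simp: spt_def)
  have "finite (spt (\<lambda>s. x (a # s)))" unfolding eq using x by (intro finite_vimageI) (auto simp: ft_iff)
  moreover have "\<forall>t\<in>spt (\<lambda>s. x (a # s)). length t = m \<and> set t \<subseteq> puiseux"
  proof
    fix t assume "t \<in> spt (\<lambda>s. x (a # s))"
    then have "a # t \<in> spt x" unfolding eq by simp
    then have "length (a # t) = Suc m \<and> set (a # t) \<subseteq> puiseux" using x unfolding ft_iff by blast
    then show "length t = m \<and> set t \<subseteq> puiseux" by simp
  qed
  ultimately show ?thesis unfolding ft_iff by blast
qed

lemma spt_consT: "spt (consT a y) = Cons a ` spt y"
proof (rule set_eqI)
  fix s show "s \<in> spt (consT a y) \<longleftrightarrow> s \<in> Cons a ` spt y"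
    by (cases s) (auto simp: spt_def)
qed

lemma ft_consT: "a \<in> puiseux \<Longrightarrow> y \<in> free_tensors m \<Longrightarrow> consT a y \<in> free_tensors (Suc m)"
  unfolding ft_iff spt_consT by auto

lemma phi_consT: "y \<in> free_tensors m \<Longrightarrow> phi (consT a y) (q # e) = a q * phi y e"
proof -
  assume y: "y \<in> free_tensors m"
  have fin: "finite (spt y)" using y by (simp add: ft_iff)
  have "phi (consT a y) (q # e) = (\<Sum>t\<in>Cons a ` spt y. consT a y t * ev t (q # e))"
    unfolding phi_def spt_consT ..
  also have "\<dots> = (\<Sum>t\<in>spt y. consT a y (a # t) * ev (a # t) (q # e))"
    by (subst sum.reindex) (auto simp: inj_on_def)
  also have "\<dots> = a q * phi y e" by (simp add: phi_def sum_distrib_left algebra_simps)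
  finally show ?thesis .
qed

lemma decomp:
  assumes x: "x \<in> free_tensors (Suc m)" and A: "finite A" and h: "\<forall>t\<in>spt x. hd t \<in> A"
  shows "x = (\<lambda>s. \<Sum>a\<in>A. consT a (\<lambda>s'. x (a # s')) s)"
proof (rule ext)
  fix s
  show "x s = (\<Sum>a\<in>A. consT a (\<lambda>s'. x (a # s')) s)"
  proof (cases s)
    case Nil
    have "s \<notin> spt x" using x Nil by (auto simp: ft_iff)
    then show ?thesis using Nil by (simp add: spt_def)
  next
    case (Cons b s')
    have "(\<Sum>a\<in>A. consT a (\<lambda>s'. x (a # s')) s) = (\<Sum>a\<in>A. if a = b then x (a # s') else 0)"
      using Cons by (intro sum.cong) auto
    also have "\<dots> = (if b \<in> A then x (b # s') else 0)" using A by simp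
    also have "\<dots> = x s"
    proof (cases "b \<in> A")
      case False
      then have "s \<notin> spt x" using h Cons by auto
      then show ?thesis using False Cons by (simp add: spt_def)
    qed (use Cons in simp)
    finally show ?thesis by simp
  qed
qed

lemma phi_decomp:
  assumes x: "x \<in> free_tensors (Suc m)" and A: "finite A" "A \<subseteq> puiseux" and h: "\<forall>t\<in>spt x. hd t \<in> A"
  shows "phi x (q # e) = (\<Sum>a\<in>A. a q * phi (\<lambda>s'. x (a # s')) e)"
proof -
  have "phi x (q # e) = phi (\<lambda>s. \<Sum>a\<in>A. consT a (\<lambda>s'. x (a # s')) s) (q # e)"
    using decomp[OF x A(1) h] by simp
  also have "\<dots> = (\<Sum>a\<in>A. phi (consT a (\<lambda>s'. x (a # s'))) (q # e))"
    using A x by (intro phi_sum[of _ _ "Suc m"]) (auto intro: ft_consT ft_slice)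
  also have "\<dots> = (\<Sum>a\<in>A. a q * phi (\<lambda>s'. x (a # s')) e)"
    using x by (intro sum.cong refl phi_consT ft_slice)
  finally show ?thesis .
qed

lemma ev_Nil: "ev t [] = 1" by (cases t) auto

lemma inj_phi: "x \<in> free_tensors m \<Longrightarrow> (\<forall>e. length e = m \<longrightarrow> phi x e = 0) \<Longrightarrow> x \<in> tensor_relations m"
proof (induction m arbitrary: x)
  case 0
  have sub: "spt x \<subseteq> {[]}" using "0.prems"(1) by (auto simp: ft_iff)
  have "phi x [] = (\<Sum>t\<in>{[]}. x t * ev t [])" by (rule phi_superset[OF _ sub]) simp
  then have "x [] = 0" using "0.prems"(2) by (simp add: ev_Nil)
  then have "spt x = {}" using sub by (auto simp: spt_def)
  then have "x = (\<lambda>_. 0)" by (auto simp: spt_def)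
  then show ?case using tensor_relations.zero by simp
next
  case (Suc m)
  have key: "\<And>n. \<forall>A x. finite A \<and> A \<subseteq> puiseux \<and> card A = n \<and> x \<in> free_tensors (Suc m) \<and>
     (\<forall>t\<in>spt x. hd t \<in> A) \<and> (\<forall>e. length e = Suc m \<longrightarrow> phi x e = 0) \<longrightarrow> x \<in> tensor_relations (Suc m)"
  proof -
    fix n
    show "?thesis n"
    proof (induction n rule: less_induct)
      case (less n)
      show ?case
      proof (intro allI impI, elim conjE)
        fix A x
        assume A: "finite A" "A \<subseteq> puiseux" and cA: "card A = n" and x: "x \<in> free_tensors (Suc m)"
          and h: "\<forall>t\<in>spt x. hd t \<in> A" and z: "\<forall>e. length e = Suc m \<longrightarrow> phi x e = 0"
        have pd: "\<And>q e. phi x (q # e) = (\<Sum>a\<in>A. a q * phi (\<lambda>s'. x (a # s')) e)"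
          by (rule phi_decomp[OF x A h])
        show "x \<in> tensor_relations (Suc m)"
        proof (cases "\<forall>c. (\<forall>q. (\<Sum>a\<in>A. c a * a q) = 0) \<longrightarrow> (\<forall>a\<in>A. c a = 0)")
          case True
          have sl: "(\<lambda>s'. x (a # s')) \<in> tensor_relations m" if a: "a \<in> A" for a
          proof (rule Suc.IH[OF ft_slice[OF x]], intro allI impI)
            fix e :: "rat list" assume le: "length e = m"
            let ?c = "\<lambda>a. phi (\<lambda>s'. x (a # s')) e"
            have "\<forall>q. (\<Sum>a\<in>A. ?c a * a q) = 0"
            proof
              fix q
              have "(\<Sum>a\<in>A. ?c a * a q) = phi x (q # e)" by (simp add: pd mult.commute)
              also have "\<dots> = 0" using z le by simp
              finally show "(\<Sum>a\<in>A. ?c a * a q) = 0" .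
            qed
            then have "\<forall>a\<in>A. ?c a = 0" using spec[OF True, of ?c] by (rule mp[rotated])
            then show "?c a = 0" using a by blast
          qed
          have "(\<lambda>s. \<Sum>a\<in>A. consT a (\<lambda>s'. x (a # s')) s) \<in> tensor_relations (Suc m)"
            using A sl by (intro rel_sum ballI rel_cons) auto
          then show ?thesis using decomp[OF x A(1) h] by simp
        next
          case False
          then obtain c a0 where c: "\<forall>q. (\<Sum>a\<in>A. c a * a q) = 0" and a0: "a0 \<in> A" "c a0 \<noteq> 0"
            by blast
          define B where "B = A - {a0}"
          define d where "d = (\<lambda>a. - c a / c a0)"
          have B: "finite B" "B \<subseteq> puiseux" "a0 \<notin> B" using A by (auto simp: B_def)
          have AB: "A = insert a0 B" using a0 by (auto simp: B_def)
          have a0eq: "a0 = (\<lambda>q. \<Sum>a\<in>B. d a * a q)"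
          proof (rule ext)
            fix q
            have "c a0 * a0 q + (\<Sum>a\<in>B. c a * a q) = 0" using c B AB by (metis sum.insert)
            then have "a0 q = - (\<Sum>a\<in>B. c a * a q) / c a0" using a0 by (simp add: field_simps)
            also have "\<dots> = (\<Sum>a\<in>B. d a * a q)" by (simp add: d_def sum_divide_distrib sum_negf)
            finally show "a0 q = (\<Sum>a\<in>B. d a * a q)" .
          qed
          define y where "y = (\<lambda>s'. x (a0 # s'))"
          have y: "y \<in> free_tensors m" unfolding y_def by (rule ft_slice[OF x])
          define x' where "x' = (\<lambda>s. x s - consT a0 y s + (\<Sum>a\<in>B. d a * consT a y s))"
          have a0p: "a0 \<in> puiseux" using A a0 by auto
          have r: "(\<lambda>s. consT a0 y s - (\<Sum>a\<in>B. d a * consT a y s)) \<in> tensor_relations (Suc m)"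
            using cons_comb[OF y B(1) B(2), of d] unfolding a0eq[symmetric] .
          have rd: "(\<lambda>s. x s - x' s) \<in> tensor_relations (Suc m)"
          proof -
            have "(\<lambda>s. x s - x' s) = (\<lambda>s. consT a0 y s - (\<Sum>a\<in>B. d a * consT a y s))"
              by (simp add: x'_def)
            then show ?thesis using r by simp
          qed
          have fx': "x' \<in> free_tensors (Suc m)"
            unfolding x'_def using x y a0p B
            by (intro ft_add ft_diff ft_sum ft_consT ballI ft_scale) auto
          have h': "\<forall>t\<in>spt x'. hd t \<in> B"
          proof
            fix t assume t: "t \<in> spt x'"
            then have "length t = Suc m" using fx' by (auto simp: ft_iff)
            then obtain b s where ts: "t = b # s" by (cases t) auto
            show "hd t \<in> B"
            proof (rule ccontr)
              assume nb: "hd t \<notin> B"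
              then have nb': "b \<notin> B" using ts by simp
              have s0: "(\<Sum>a\<in>B. d a * consT a y (b # s)) = 0"
                by (rule sum.neutral) (use nb' in auto)
              have "x' t = 0"
              proof (cases "b = a0")
                case True
                then show ?thesis using s0 ts by (simp add: x'_def y_def)
              next
                case False
                then have "b \<notin> A" using nb' AB by auto
                then have "t \<notin> spt x" using h ts by auto
                then show ?thesis using s0 ts False by (simp add: x'_def spt_def)
              qed
              then show False using t by (simp add: spt_def)
            qed
          qed
          have z': "\<forall>e. length e = Suc m \<longrightarrow> phi x' e = 0"
          proof (intro allI impI)
            fix e :: "rat list" assume le: "length e = Suc m"
            have fd: "(\<lambda>s. x s - x' s) \<in> free_tensors (Suc m)" using x fx' by (rule ft_diff)
            have "x' = (\<lambda>s. x s - (\<lambda>s. x s - x' s) s)" by simp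
            then have "phi x' e = phi x e - phi (\<lambda>s. x s - x' s) e"
              using phi_diff[OF x fd, of e] by simp
            also have "\<dots> = 0" using z le rel_phi[OF rd] by simp
            finally show "phi x' e = 0" .
          qed
          have "card B < n" using cA AB B by (simp add: card_insert_if)
          then have "x' \<in> tensor_relations (Suc m)"
            using less.IH B fx' h' z' by blast
          then have "(\<lambda>s. x' s + (\<lambda>s. x s - x' s) s) \<in> tensor_relations (Suc m)"
            using rd by (rule tensor_relations.add)
          then show ?thesis by simp
        qed
      qed
    qed
  qed
  have "finite (hd ` spt x)" using Suc.prems by (simp add: ft_iff)
  moreover have "hd ` spt x \<subseteq> puiseux"
  proof
    fix f assume "f \<in> hd ` spt x"
    then obtain t where t: "t \<in> spt x" "f = hd t" by auto
    then have "length t = Suc m" "set t \<subseteq> puiseux" using Suc.prems by (auto simp: ft_iff)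
    then show "f \<in> puiseux" using t by (cases t) auto
  qed
  ultimately show ?case using key[of "card (hd ` spt x)"] Suc.prems by blast
qed

definition LL :: "(rat \<Rightarrow> real) list \<Rightarrow> (rat \<Rightarrow> real) list \<Rightarrow> rat list \<Rightarrow> rat list set" where
  "LL t u e = {a. length a = length e \<and> ev t a \<noteq> 0 \<and> ev u (map2 (-) e a) \<noteq> 0}"

lemma conv_pair:
  "length t = length e \<Longrightarrow> length u = length e \<Longrightarrow> set t \<subseteq> puiseux \<Longrightarrow> set u \<subseteq> puiseux \<Longrightarrow>
   finite (LL t u e) \<and> ev (map2 pmult t u) e = (\<Sum>a\<in>LL t u e. ev t a * ev u (map2 (-) e a))"
proof (induction t arbitrary: u e)
  case Nil
  then have "e = []" "u = []" by auto
  moreover have "LL [] [] [] = {[]}" by (auto simp: LL_def)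
  ultimately show ?case by simp
next
  case (Cons f t)
  obtain g u' where u: "u = g # u'" using Cons.prems by (cases u) auto
  obtain q e' where e: "e = q # e'" using Cons.prems by (cases e) auto
  have fp: "f \<in> puiseux" and gp: "g \<in> puiseux" using Cons.prems u by auto
  have IH: "finite (LL t u' e') \<and> ev (map2 pmult t u') e' = (\<Sum>a\<in>LL t u' e'. ev t a * ev u' (map2 (-) e' a))"
    using Cons.prems u e by (intro Cons.IH) auto
  let ?A0 = "{a0. f a0 \<noteq> 0 \<and> g (q - a0) \<noteq> 0}"
  have fA0: "finite ?A0" by (rule pm_finite[OF fp gp])
  have Leq: "LL (f # t) u e = (\<lambda>(a0, a). a0 # a) ` (?A0 \<times> LL t u' e')"
  proof (rule set_eqI)
    fix a
    show "a \<in> LL (f # t) u e \<longleftrightarrow> a \<in> (\<lambda>(a0, a). a0 # a) ` (?A0 \<times> LL t u' e')"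
    proof
      assume a: "a \<in> LL (f # t) u e"
      then have "length a = Suc (length e')" using e by (simp add: LL_def)
      then obtain a0 a' where aa: "a = a0 # a'" by (cases a) auto
      have "(a0, a') \<in> ?A0 \<times> LL t u' e'" using a unfolding aa u e LL_def by simp
      then show "a \<in> (\<lambda>(a0, a). a0 # a) ` (?A0 \<times> LL t u' e')"
        by (rule rev_image_eqI) (simp add: aa)
    next
      assume "a \<in> (\<lambda>(a0, a). a0 # a) ` (?A0 \<times> LL t u' e')"
      then obtain p where p0: "p \<in> ?A0 \<times> LL t u' e'" and ap: "a = (\<lambda>(a0, a). a0 # a) p" by (rule imageE)
      obtain a0 a' where pp: "p = (a0, a')" by (cases p)
      have p: "(a0, a') \<in> ?A0 \<times> LL t u' e'" using p0 pp by simp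
      have aa: "a = a0 # a'" using ap pp by simp
      show "a \<in> LL (f # t) u e" using p unfolding aa u e LL_def by simp
    qed
  qed
  have inj: "inj_on (\<lambda>(a0, a). a0 # a) (?A0 \<times> LL t u' e')" by (auto simp: inj_on_def)
  have fin: "finite (LL (f # t) u e)" unfolding Leq using fA0 IH by auto
  have "(\<Sum>a\<in>LL (f # t) u e. ev (f # t) a * ev u (map2 (-) e a))
      = (\<Sum>(a0, a)\<in>?A0 \<times> LL t u' e'. ev (f # t) (a0 # a) * ev u (map2 (-) e (a0 # a)))"
    unfolding Leq sum.reindex[OF inj] by (rule sum.cong[OF refl]) clarsimp
  also have "\<dots> = (\<Sum>(a0, a)\<in>?A0 \<times> LL t u' e'. (f a0 * g (q - a0)) * (ev t a * ev u' (map2 (-) e' a)))"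
    by (rule sum.cong[OF refl]) (clarsimp simp: u e)
  also have "\<dots> = (\<Sum>a0\<in>?A0. \<Sum>a\<in>LL t u' e'. (f a0 * g (q - a0)) * (ev t a * ev u' (map2 (-) e' a)))"
    by (rule sum.cartesian_product[symmetric])
  also have "\<dots> = (\<Sum>a0\<in>?A0. f a0 * g (q - a0)) * (\<Sum>a\<in>LL t u' e'. ev t a * ev u' (map2 (-) e' a))"
    by (simp add: sum_product)
  also have "\<dots> = pmult f g q * ev (map2 pmult t u') e'" using IH by (simp add: pmult_def)
  also have "\<dots> = ev (map2 pmult (f # t) u) e" using u e by simp
  finally show ?case using fin by simp
qed

lemma conv_pair_K:
  assumes "length t = length e" "length u = length e" "set t \<subseteq> puiseux" "set u \<subseteq> puiseux"
    and K: "finite K" "LL t u e \<subseteq> K" "K \<subseteq> {a. length a = length e}"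
  shows "ev (map2 pmult t u) e = (\<Sum>a\<in>K. ev t a * ev u (map2 (-) e a))"
proof -
  have "ev (map2 pmult t u) e = (\<Sum>a\<in>LL t u e. ev t a * ev u (map2 (-) e a))"
    using conv_pair[OF assms(1-4)] by simp
  also have "\<dots> = (\<Sum>a\<in>K. ev t a * ev u (map2 (-) e a))"
  proof (rule sum.mono_neutral_left[OF K(1) K(2)], rule ballI)
    fix a assume a: "a \<in> K - LL t u e"
    then have "length a = length e" using K(3) by blast
    then have "\<not> (ev t a \<noteq> 0 \<and> ev u (map2 (-) e a) \<noteq> 0)" using a unfolding LL_def by blast
    then show "ev t a * ev u (map2 (-) e a) = 0" by simp
  qed
  finally show ?thesis .
qed

lemma map2_pmult_puiseux: "set t \<subseteq> puiseux \<Longrightarrow> set u \<subseteq> puiseux \<Longrightarrow> set (map2 pmult t u) \<subseteq> puiseux"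
proof (induction t arbitrary: u)
  case Nil then show ?case by simp
next
  case (Cons f t)
  then show ?case by (cases u) (auto intro: puiseux_pmult)
qed

lemma tm_set: "{(t, u). x t \<noteq> 0 \<and> y u \<noteq> 0 \<and> map2 pmult t u = s} =
   {p. p \<in> spt x \<times> spt y \<and> (\<lambda>(t, u). map2 pmult t u) p = s}"
proof (rule set_eqI)
  fix p :: "(rat \<Rightarrow> real) list \<times> (rat \<Rightarrow> real) list"
  obtain t u where "p = (t, u)" by (cases p)
  then show "p \<in> {(t, u). x t \<noteq> 0 \<and> y u \<noteq> 0 \<and> map2 pmult t u = s} \<longleftrightarrow>
   p \<in> {p. p \<in> spt x \<times> spt y \<and> (\<lambda>(t, u). map2 pmult t u) p = s}" by (simp add: spt_def)
qed

lemma spt_tm: "spt (tensor_mult x y) \<subseteq> (\<lambda>(t, u). map2 pmult t u) ` (spt x \<times> spt y)"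
proof
  fix s assume "s \<in> spt (tensor_mult x y)"
  have "{(t, u). x t \<noteq> 0 \<and> y u \<noteq> 0 \<and> map2 pmult t u = s} \<noteq> {}"
  proof
    assume "{(t, u). x t \<noteq> 0 \<and> y u \<noteq> 0 \<and> map2 pmult t u = s} = {}"
    then have "tensor_mult x y s = 0" unfolding tensor_mult_def by (simp only: sum.empty)
    then show False using \<open>s \<in> spt (tensor_mult x y)\<close> by (simp add: spt_def)
  qed
  then obtain p where p: "p \<in> {(t, u). x t \<noteq> 0 \<and> y u \<noteq> 0 \<and> map2 pmult t u = s}" by (meson ex_in_conv)
  obtain t u where pp: "p = (t, u)" by (cases p)
  have tu: "x t \<noteq> 0" "y u \<noteq> 0" "map2 pmult t u = s" using p pp by simp_all
  have "(t, u) \<in> spt x \<times> spt y" using tu by (simp add: spt_def)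
  then show "s \<in> (\<lambda>(t, u). map2 pmult t u) ` (spt x \<times> spt y)" by (rule rev_image_eqI) (simp add: tu)
qed

lemma ft_tm: "x \<in> free_tensors m \<Longrightarrow> y \<in> free_tensors m \<Longrightarrow> tensor_mult x y \<in> free_tensors m"
proof -
  assume x: "x \<in> free_tensors m" and y: "y \<in> free_tensors m"
  have "finite (spt (tensor_mult x y))"
  proof (rule finite_subset[OF spt_tm])
    have "finite (spt x \<times> spt y)" using x y by (simp add: ft_iff)
    then show "finite ((\<lambda>(t, u). map2 pmult t u) ` (spt x \<times> spt y))" by (rule finite_imageI)
  qed
  moreover have "\<forall>s\<in>spt (tensor_mult x y). length s = m \<and> set s \<subseteq> puiseux"
  proof
    fix s assume "s \<in> spt (tensor_mult x y)"
    then have "s \<in> (\<lambda>(t, u). map2 pmult t u) ` (spt x \<times> spt y)" using spt_tm[of x y] by (rule subsetD[rotated])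
    then obtain p where p0: "p \<in> spt x \<times> spt y" and sp: "s = (\<lambda>(t, u). map2 pmult t u) p" by (rule imageE)
    obtain t u where pp: "p = (t, u)" by (cases p)
    have tu: "t \<in> spt x" "u \<in> spt y" "s = map2 pmult t u" using p0 sp pp by simp_all
    then have "length t = m" "set t \<subseteq> puiseux" "length u = m" "set u \<subseteq> puiseux"
      using x y by (auto simp: ft_iff)
    then show "length s = m \<and> set s \<subseteq> puiseux" using tu(3) map2_pmult_puiseux[of t u] by simp
  qed
  ultimately show ?thesis by (simp add: ft_iff)
qed

lemma phi_tm:
  assumes x: "x \<in> free_tensors m" and y: "y \<in> free_tensors m"
  shows "phi (tensor_mult x y) e = (\<Sum>(t, u)\<in>spt x \<times> spt y. x t * y u * ev (map2 pmult t u) e)"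
proof -
  let ?g = "\<lambda>(t, u). map2 pmult t u" and ?P = "spt x \<times> spt y"
  have fP: "finite ?P" using x y by (simp add: ft_iff)
  have fS: "finite (?g ` ?P)" using fP by simp
  have "phi (tensor_mult x y) e = (\<Sum>s\<in>?g ` ?P. tensor_mult x y s * ev s e)"
    by (rule phi_superset[OF fS spt_tm])
  also have "\<dots> = (\<Sum>s\<in>?g ` ?P. \<Sum>p\<in>{p. p \<in> ?P \<and> ?g p = s}. (\<lambda>(t, u). x t * y u * ev (map2 pmult t u) e) p)"
  proof (rule sum.cong[OF refl])
    fix s assume "s \<in> ?g ` ?P"
    have "tensor_mult x y s * ev s e = (\<Sum>p\<in>{p. p \<in> ?P \<and> ?g p = s}. (\<lambda>(t, u). x t * y u) p) * ev s e"
      unfolding tensor_mult_def tm_set ..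
    also have "\<dots> = (\<Sum>p\<in>{p. p \<in> ?P \<and> ?g p = s}. (\<lambda>(t, u). x t * y u) p * ev s e)"
      by (rule sum_distrib_right)
    also have "\<dots> = (\<Sum>p\<in>{p. p \<in> ?P \<and> ?g p = s}. (\<lambda>(t, u). x t * y u * ev (map2 pmult t u) e) p)"
      by (intro sum.cong refl) auto
    finally show "tensor_mult x y s * ev s e = (\<Sum>p\<in>{p. p \<in> ?P \<and> ?g p = s}. (\<lambda>(t, u). x t * y u * ev (map2 pmult t u) e) p)" .
  qed
  also have "\<dots> = (\<Sum>(t, u)\<in>?P. x t * y u * ev (map2 pmult t u) e)"
    by (rule sum.group[OF fP fS]) simp
  finally show ?thesis .
qed

lemma phi_tm_conv:
  assumes x: "x \<in> free_tensors m" and y: "y \<in> free_tensors m" and le: "length e = m"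
    and K: "finite K" "K \<subseteq> {a. length a = m}" "\<forall>t\<in>spt x. \<forall>u\<in>spt y. LL t u e \<subseteq> K"
  shows "phi (tensor_mult x y) e = (\<Sum>a\<in>K. phi x a * phi y (map2 (-) e a))"
proof -
  have fx: "finite (spt x)" and fy: "finite (spt y)" using x y by (auto simp: ft_iff)
  have "phi (tensor_mult x y) e = (\<Sum>(t, u)\<in>spt x \<times> spt y. x t * y u * ev (map2 pmult t u) e)"
    by (rule phi_tm[OF x y])
  also have "\<dots> = (\<Sum>(t, u)\<in>spt x \<times> spt y. x t * y u * (\<Sum>a\<in>K. ev t a * ev u (map2 (-) e a)))"
  proof (rule sum.cong[OF refl], clarify)
    fix t u assume tu: "t \<in> spt x" "u \<in> spt y"
    then have "length t = m" "set t \<subseteq> puiseux" "length u = m" "set u \<subseteq> puiseux"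
      using x y by (auto simp: ft_iff)
    then have "ev (map2 pmult t u) e = (\<Sum>a\<in>K. ev t a * ev u (map2 (-) e a))"
      using K tu le by (intro conv_pair_K) auto
    then show "x t * y u * ev (map2 pmult t u) e = x t * y u * (\<Sum>a\<in>K. ev t a * ev u (map2 (-) e a))" by simp
  qed
  also have "\<dots> = (\<Sum>t\<in>spt x. \<Sum>u\<in>spt y. \<Sum>a\<in>K. (x t * ev t a) * (y u * ev u (map2 (-) e a)))"
    by (subst sum.cartesian_product[symmetric]) (simp add: sum_distrib_left algebra_simps)
  also have "\<dots> = (\<Sum>t\<in>spt x. \<Sum>a\<in>K. \<Sum>u\<in>spt y. (x t * ev t a) * (y u * ev u (map2 (-) e a)))"
    by (intro sum.cong refl sum.swap)
  also have "\<dots> = (\<Sum>a\<in>K. \<Sum>t\<in>spt x. \<Sum>u\<in>spt y. (x t * ev t a) * (y u * ev u (map2 (-) e a)))"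
    by (rule sum.swap)
  also have "\<dots> = (\<Sum>a\<in>K. phi x a * phi y (map2 (-) e a))"
    by (simp add: phi_def sum_product)
  finally show ?thesis .
qed

definition pos :: "nat \<Rightarrow> (rat list \<Rightarrow> real) \<Rightarrow> bool" where
  "pos m F \<longleftrightarrow> (\<exists>e. length e = m \<and> F e > 0 \<and> (\<forall>e'. length e' = m \<and> lexl e' e \<longrightarrow> F e' = 0))"

lemma posE:
  assumes "pos m F"
  obtains e where "length e = m" "F e > 0" "\<And>e'. length e' = m \<Longrightarrow> lexl e' e \<Longrightarrow> F e' = 0"
  using assms unfolding pos_def by blast

lemma posI:
  assumes "length e = m" "F e > 0" "\<And>e'. length e' = m \<Longrightarrow> lexl e' e \<Longrightarrow> F e' = 0"
  shows "pos m F"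
  using assms unfolding pos_def by blast

lemma pos_cong: "pos m F \<Longrightarrow> (\<And>e. length e = m \<Longrightarrow> G e = F e) \<Longrightarrow> pos m G"
proof -
  assume p: "pos m F" and c: "\<And>e. length e = m \<Longrightarrow> G e = F e"
  from p obtain e where e: "length e = m" "F e > 0" "\<And>e'. length e' = m \<Longrightarrow> lexl e' e \<Longrightarrow> F e' = 0"
    unfolding pos_def by blast
  show ?thesis
  proof (rule posI[of e])
    show "length e = m" by fact
    show "G e > 0" using e c by simp
    fix e' assume "length e' = m" "lexl e' e"
    then show "G e' = 0" using e c by simp
  qed
qed

lemma pos_nz: "pos m F \<Longrightarrow> \<exists>e. length e = m \<and> F e \<noteq> 0"
  by (metis posE less_irrefl)

lemma not_pos_both: "pos m F \<Longrightarrow> pos m (\<lambda>e. - F e) \<Longrightarrow> False"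
proof -
  assume p1: "pos m F" and p2: "pos m (\<lambda>e. - F e)"
  from p1 obtain e1 where e1: "length e1 = m" "F e1 > 0" "\<And>e'. length e' = m \<Longrightarrow> lexl e' e1 \<Longrightarrow> F e' = 0"
    unfolding pos_def by blast
  from p2 obtain e2 where e2: "length e2 = m" "- F e2 > 0" "\<And>e'. length e' = m \<Longrightarrow> lexl e' e2 \<Longrightarrow> - F e' = 0"
    unfolding pos_def by blast
  show False
  proof (cases "e1 = e2")
    case True then show ?thesis using e1 e2 by simp
  next
    case False
    then have "lexl e1 e2 \<or> lexl e2 e1" using e1 e2 by (intro lexl_total) simp
    then show ?thesis
    proof
      assume "lexl e1 e2" then have "- F e1 = 0" using e2 e1 by blast
      then show False using e1 by simp
    next
      assume "lexl e2 e1" then have "F e2 = 0" using e2 e1 by blast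
      then show False using e2 by simp
    qed
  qed
qed

lemma pos_add: "pos m F \<Longrightarrow> pos m G \<Longrightarrow> pos m (\<lambda>e. F e + G e)"
proof -
  assume p1: "pos m F" and p2: "pos m G"
  from p1 obtain e1 where e1: "length e1 = m" "F e1 > 0" "\<And>e'. length e' = m \<Longrightarrow> lexl e' e1 \<Longrightarrow> F e' = 0"
    unfolding pos_def by blast
  from p2 obtain e2 where e2: "length e2 = m" "G e2 > 0" "\<And>e'. length e' = m \<Longrightarrow> lexl e' e2 \<Longrightarrow> G e' = 0"
    unfolding pos_def by blast
  show ?thesis
  proof (cases "e1 = e2")
    case True
    show ?thesis
    proof (rule posI[of e1])
      show "length e1 = m" by fact
      show "F e1 + G e1 > 0" using e1 e2 True by simp
      fix e' assume "length e' = m" "lexl e' e1"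
      then show "F e' + G e' = 0" using e1 e2 True by simp
    qed
  next
    case False
    then have "lexl e1 e2 \<or> lexl e2 e1" using e1 e2 by (intro lexl_total) simp
    then show ?thesis
    proof
      assume l: "lexl e1 e2"
      show ?thesis
      proof (rule posI[of e1])
        show "length e1 = m" by fact
        show "F e1 + G e1 > 0" using e1 e2 l by simp
        fix e' assume "length e' = m" "lexl e' e1"
        then show "F e' + G e' = 0" using e1 e2 l lexl_trans[of e' e1 e2] by simp
      qed
    next
      assume l: "lexl e2 e1"
      show ?thesis
      proof (rule posI[of e2])
        show "length e2 = m" by fact
        show "F e2 + G e2 > 0" using e1 e2 l by simp
        fix e' assume "length e' = m" "lexl e' e2"
        then show "F e' + G e' = 0" using e1 e2 l lexl_trans[of e' e2 e1] by simp
      qed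
    qed
  qed
qed

lemma pos_simple: "set us \<subseteq> puiseux_pos \<Longrightarrow> pos (length us) (ev us)"
proof (induction us)
  case Nil
  show ?case by (rule posI[of "[]"]) auto
next
  case (Cons f us)
  then have "pos (length us) (ev us)" by simp
  then obtain e where e: "length e = length us" "ev us e > 0" "\<And>e'. length e' = length us \<Longrightarrow> lexl e' e \<Longrightarrow> ev us e' = 0"
    unfolding pos_def by blast
  have "f \<in> puiseux_pos" using Cons.prems by simp
  then obtain q where q: "f q > 0" "\<And>p. p < q \<Longrightarrow> f p = 0" unfolding puiseux_pos_def by blast
  show ?case
  proof (rule posI[of "q # e"])
    show "length (q # e) = length (f # us)" using e by simp
    show "ev (f # us) (q # e) > 0" using e q by simp
    fix e' assume l: "length e' = length (f # us)" and lx: "lexl e' (q # e)"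
    then obtain q' e'' where ee: "e' = q' # e''" by (cases e') auto
    show "ev (f # us) e' = 0"
    proof (cases "q' < q")
      case True then show ?thesis using q ee by simp
    next
      case False
      then have "q' = q" "lexl e'' e" using lx ee by auto
      then have "ev us e'' = 0" using e l ee by simp
      then show ?thesis using ee by simp
    qed
  qed
qed

lemma ev_nz_grid: "length t = length e \<Longrightarrow> ev t e \<noteq> 0 \<Longrightarrow> \<forall>q\<in>set e. \<exists>f\<in>set t. f q \<noteq> 0"
proof (induction t arbitrary: e)
  case Nil then show ?case by simp
next
  case (Cons f t)
  then obtain q e' where e: "e = q # e'" by (cases e) auto
  have "f q \<noteq> 0" "ev t e' \<noteq> 0" using Cons.prems e by auto
  moreover have "\<forall>q\<in>set e'. \<exists>f\<in>set t. f q \<noteq> 0" using Cons e calculation by simp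
  ultimately show ?case using e by auto
qed

lemma pos_tri:
  assumes x: "x \<in> free_tensors m" and nz: "\<exists>e. length e = m \<and> phi x e \<noteq> 0"
  shows "pos m (phi x) \<or> pos m (\<lambda>e. - phi x e)"
proof -
  let ?F = "\<Union>t\<in>spt x. set t"
  have fF: "finite ?F" using x by (auto simp: ft_iff)
  have sF: "?F \<subseteq> puiseux" using x by (auto simp: ft_iff)
  obtain n M where n: "n > 0" and
    nm: "\<forall>f\<in>?F. \<forall>q. f q \<noteq> 0 \<longrightarrow> M \<le> q \<and> (\<exists>k::int. q = of_int k / of_nat n)"
    using puiseux_common[OF fF sF] by (elim exE conjE) (rule that; assumption)
  let ?S = "{e. length e = m \<and> phi x e \<noteq> 0}"
  have ne: "?S \<noteq> {}" using nz by auto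
  have sub: "?S \<subseteq> {e. length e = m \<and> (\<forall>q\<in>set e. M \<le> q \<and> (\<exists>k::int. q = of_int k / of_nat n))}"
  proof
    fix e assume "e \<in> ?S"
    then have le: "length e = m" and pz: "phi x e \<noteq> 0" by auto
    from pz obtain t where t: "t \<in> spt x" "x t * ev t e \<noteq> 0"
      unfolding phi_def by (rule sum.not_neutral_contains_not_neutral)
    have lt: "length t = m" using t x by (auto simp: ft_iff)
    have "\<forall>q\<in>set e. \<exists>f\<in>set t. f q \<noteq> 0" using ev_nz_grid[of t e] lt le t by simp
    then have "\<forall>q\<in>set e. M \<le> q \<and> (\<exists>k::int. q = of_int k / of_nat n)"
    proof (intro ballI)
      fix q assume "q \<in> set e" "\<forall>q\<in>set e. \<exists>f\<in>set t. f q \<noteq> 0"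
      then obtain f where f: "f \<in> set t" "f q \<noteq> 0" by blast
      have "f \<in> ?F" by (rule UN_I[where B=set, OF t(1) f(1)])
      then show "M \<le> q \<and> (\<exists>k::int. q = of_int k / of_nat n)" using nm f(2) by blast
    qed
    then show "e \<in> {e. length e = m \<and> (\<forall>q\<in>set e. M \<le> q \<and> (\<exists>k::int. q = of_int k / of_nat n))}"
      using le by simp
  qed
  obtain e0 where e0: "e0 \<in> ?S" "\<forall>e'\<in>?S. e' \<noteq> e0 \<longrightarrow> lexl e0 e'"
    using lex_min[OF n ne sub] by (elim bexE) (rule that; assumption)
  have below: "phi x e' = 0" if "length e' = m" "lexl e' e0" for e'
  proof (rule ccontr)
    assume "phi x e' \<noteq> 0"
    then have "e' \<in> ?S" using that by simp
    moreover have "e' \<noteq> e0" using that lexl_irrefl by blast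
    ultimately have "lexl e0 e'" using e0(2) by blast
    then have "lexl e' e'" by (rule lexl_trans[OF that(2)])
    then show False using lexl_irrefl by blast
  qed
  have l0: "length e0 = m" and p0: "phi x e0 \<noteq> 0" using e0 by auto
  show ?thesis
  proof (cases "phi x e0 > 0")
    case True
    then have "pos m (phi x)" using l0 below by (intro posI[of e0]) auto
    then show ?thesis by blast
  next
    case False
    then have "- phi x e0 > 0" using p0 by simp
    then have "pos m (\<lambda>e. - phi x e)" using l0 below by (intro posI[of e0]) auto
    then show ?thesis by blast
  qed
qed

lemma pos_mult:
  assumes x: "x \<in> free_tensors m" and y: "y \<in> free_tensors m"
    and px: "pos m (phi x)" and py: "pos m (phi y)"
  shows "pos m (phi (tensor_mult x y))"
proof -
  from px obtain a where a: "length a = m" "phi x a > 0" "\<And>e'. length e' = m \<Longrightarrow> lexl e' a \<Longrightarrow> phi x e' = 0"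
    unfolding pos_def by blast
  from py obtain b where b: "length b = m" "phi y b > 0" "\<And>e'. length e' = m \<Longrightarrow> lexl e' b \<Longrightarrow> phi y e' = 0"
    unfolding pos_def by blast
  define es where "es = map2 (+) a b"
  have les: "length es = m" using a b by (simp add: es_def)
  have esa: "map2 (-) es a = b" unfolding es_def using a b by (intro add_sub_list) simp
  have key: "phi (tensor_mult x y) e = phi x a * phi y (map2 (-) e a)"
    if le: "length e = m" and ee: "e = es \<or> lexl e es" for e
  proof -
    define K where "K = (\<Union>t\<in>spt x. \<Union>u\<in>spt y. LL t u e) \<union> {a}"
    have fK: "finite K"
    proof -
      have "finite (LL t u e)" if "t \<in> spt x" "u \<in> spt y" for t u
      proof -
        have "length t = m" "set t \<subseteq> puiseux" "length u = m" "set u \<subseteq> puiseux"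
          using that x y by (auto simp: ft_iff)
        then show ?thesis using conv_pair[of t e u] le by simp
      qed
      moreover have "finite (spt x)" "finite (spt y)" using x y by (auto simp: ft_iff)
      ultimately show ?thesis unfolding K_def by auto
    qed
    have Kl: "K \<subseteq> {a. length a = m}" unfolding K_def LL_def using a le by auto
    have KL: "\<forall>t\<in>spt x. \<forall>u\<in>spt y. LL t u e \<subseteq> K" unfolding K_def by blast
    have "phi (tensor_mult x y) e = (\<Sum>a'\<in>K. phi x a' * phi y (map2 (-) e a'))"
      by (rule phi_tm_conv[OF x y le fK Kl KL])
    also have "\<dots> = phi x a * phi y (map2 (-) e a) + (\<Sum>a'\<in>K - {a}. phi x a' * phi y (map2 (-) e a'))"
      using fK by (subst sum.remove[of K a]) (auto simp: K_def)
    also have "(\<Sum>a'\<in>K - {a}. phi x a' * phi y (map2 (-) e a')) = 0"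
    proof (rule sum.neutral, rule ballI)
      fix a' assume a': "a' \<in> K - {a}"
      then have la': "length a' = m" using Kl by blast
      show "phi x a' * phi y (map2 (-) e a') = 0"
      proof (cases "lexl a' a")
        case True then show ?thesis using a la' by simp
      next
        case False
        then have "lexl a a'" using lexl_total[of a' a] la' a a' by auto
        then have l1: "lexl (map2 (-) e a') (map2 (-) e a)" using lexl_sub2[of a e a'] la' a le by simp
        have "lexl (map2 (-) e a') b"
        proof (cases "e = es")
          case True then show ?thesis using l1 esa by simp
        next
          case False
          then have "lexl e es" using ee by simp
          then have "lexl (map2 (-) e a) (map2 (-) es a)" using lexl_sub1[of e a es] le les a by simp
          then show ?thesis using l1 esa lexl_trans by metis
        qed
        then have "phi y (map2 (-) e a') = 0" using b la' le by simp
        then show ?thesis by simp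
      qed
    qed
    finally show ?thesis by simp
  qed
  show ?thesis
  proof (rule posI[of es])
    show "length es = m" by fact
    show "phi (tensor_mult x y) es > 0" using key[of es] les esa a b by simp
    fix e' assume le': "length e' = m" and lx: "lexl e' es"
    have "lexl (map2 (-) e' a) (map2 (-) es a)" using lexl_sub1[of e' a es] le' les a lx by simp
    then have "phi y (map2 (-) e' a) = 0" using b esa le' a by simp
    then show "phi (tensor_mult x y) e' = 0" using key[of e'] le' lx by simp
  qed
qed

lemma equiv0: "tensor_equiv m x (\<lambda>_. 0) \<longleftrightarrow> x \<in> tensor_relations m"
  by (simp add: tensor_equiv_def)

theorem mainTheorem8:
  fixes m :: nat
  shows "\<exists>P \<subseteq> free_tensors m.
    (\<forall>x\<in>P. \<forall>y\<in>free_tensors m. tensor_equiv m x y \<longrightarrow> y \<in> P) \<and>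
    (\<forall>x\<in>free_tensors m.
        (x \<in> P \<or> tensor_equiv m x (\<lambda>_. 0) \<or> (\<lambda>s. - x s) \<in> P) \<and>
        \<not> (x \<in> P \<and> tensor_equiv m x (\<lambda>_. 0)) \<and>
        \<not> (x \<in> P \<and> (\<lambda>s. - x s) \<in> P) \<and>
        \<not> (tensor_equiv m x (\<lambda>_. 0) \<and> (\<lambda>s. - x s) \<in> P)) \<and>
    (\<forall>x\<in>P. \<forall>y\<in>P. (\<lambda>s. x s + y s) \<in> P) \<and>
    (\<forall>x\<in>P. \<forall>y\<in>P. tensor_mult x y \<in> P) \<and>
    (\<forall>us. length us = m \<and> set us \<subseteq> puiseux_pos \<longrightarrow> simple_tensor us \<in> P)"
proof -
  define P where "P = {x \<in> free_tensors m. pos m (phi x)}"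
  have Pi: "x \<in> P \<longleftrightarrow> x \<in> free_tensors m \<and> pos m (phi x)" for x by (simp add: P_def)
  have relz: "\<And>x e. x \<in> tensor_relations m \<Longrightarrow> length e = m \<Longrightarrow> phi x e = 0"
    using rel_phi by blast
  have negP: "(\<lambda>s. - x s) \<in> P \<longleftrightarrow> pos m (\<lambda>e. - phi x e)" if x: "x \<in> free_tensors m" for x
  proof
    assume "(\<lambda>s. - x s) \<in> P"
    then have "pos m (phi (\<lambda>s. - x s))" by (simp add: Pi)
    then show "pos m (\<lambda>e. - phi x e)" by (rule pos_cong) (simp add: phi_neg[OF x])
  next
    assume "pos m (\<lambda>e. - phi x e)"
    then have "pos m (phi (\<lambda>s. - x s))" by (rule pos_cong) (simp add: phi_neg[OF x])
    then show "(\<lambda>s. - x s) \<in> P" using ft_neg[OF x] by (simp add: Pi)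
  qed
  have c1: "\<forall>x\<in>P. \<forall>y\<in>free_tensors m. tensor_equiv m x y \<longrightarrow> y \<in> P"
  proof (intro ballI impI)
    fix x y assume xP: "x \<in> P" and y: "y \<in> free_tensors m" and eq: "tensor_equiv m x y"
    have x: "x \<in> free_tensors m" and px: "pos m (phi x)" using xP by (auto simp: Pi)
    have r: "(\<lambda>s. x s - y s) \<in> tensor_relations m" using eq by (simp add: tensor_equiv_def)
    have "pos m (phi y)"
    proof (rule pos_cong[OF px])
      fix e :: "rat list" assume le: "length e = m"
      have "phi (\<lambda>s. x s - y s) e = 0" using relz[OF r le] .
      then show "phi y e = phi x e" using phi_diff[OF x y, of e] by simp
    qed
    then show "y \<in> P" using y by (simp add: Pi)
  qed
  have c2: "\<forall>x\<in>free_tensors m.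
        (x \<in> P \<or> tensor_equiv m x (\<lambda>_. 0) \<or> (\<lambda>s. - x s) \<in> P) \<and>
        \<not> (x \<in> P \<and> tensor_equiv m x (\<lambda>_. 0)) \<and>
        \<not> (x \<in> P \<and> (\<lambda>s. - x s) \<in> P) \<and>
        \<not> (tensor_equiv m x (\<lambda>_. 0) \<and> (\<lambda>s. - x s) \<in> P)"
  proof (intro ballI conjI)
    fix x assume x: "x \<in> free_tensors m"
    show "x \<in> P \<or> tensor_equiv m x (\<lambda>_. 0) \<or> (\<lambda>s. - x s) \<in> P"
    proof (cases "\<forall>e. length e = m \<longrightarrow> phi x e = 0")
      case True
      then have "x \<in> tensor_relations m" by (rule inj_phi[OF x])
      then show ?thesis by (simp add: equiv0)
    next
      case False
      then have "\<exists>e. length e = m \<and> phi x e \<noteq> 0" by blast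
      then have "pos m (phi x) \<or> pos m (\<lambda>e. - phi x e)" by (rule pos_tri[OF x])
      then show ?thesis using negP[OF x] x by (auto simp: Pi)
    qed
    show "\<not> (x \<in> P \<and> tensor_equiv m x (\<lambda>_. 0))"
    proof
      assume a: "x \<in> P \<and> tensor_equiv m x (\<lambda>_. 0)"
      then have "pos m (phi x)" "x \<in> tensor_relations m" by (auto simp: Pi equiv0)
      then show False using pos_nz relz by blast
    qed
    show "\<not> (x \<in> P \<and> (\<lambda>s. - x s) \<in> P)"
    proof
      assume "x \<in> P \<and> (\<lambda>s. - x s) \<in> P"
      then have "pos m (phi x)" "pos m (\<lambda>e. - phi x e)" using negP[OF x] by (auto simp: Pi)
      then show False by (rule not_pos_both)
    qed
    show "\<not> (tensor_equiv m x (\<lambda>_. 0) \<and> (\<lambda>s. - x s) \<in> P)"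
    proof
      assume "tensor_equiv m x (\<lambda>_. 0) \<and> (\<lambda>s. - x s) \<in> P"
      then have r: "x \<in> tensor_relations m" and p: "pos m (\<lambda>e. - phi x e)" using negP[OF x] by (auto simp: equiv0)
      from pos_nz[OF p] obtain e where "length e = m" "- phi x e \<noteq> 0" by blast
      then show False using relz[OF r] by simp
    qed
  qed
  have c3: "\<forall>x\<in>P. \<forall>y\<in>P. (\<lambda>s. x s + y s) \<in> P"
  proof (intro ballI)
    fix x y assume "x \<in> P" "y \<in> P"
    then have x: "x \<in> free_tensors m" "pos m (phi x)" and y: "y \<in> free_tensors m" "pos m (phi y)"
      by (auto simp: Pi)
    have "pos m (\<lambda>e. phi x e + phi y e)" by (rule pos_add[OF x(2) y(2)])
    then have "pos m (phi (\<lambda>s. x s + y s))" by (rule pos_cong) (simp add: phi_add[OF x(1) y(1)])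
    then show "(\<lambda>s. x s + y s) \<in> P" using ft_add[OF x(1) y(1)] by (simp add: Pi)
  qed
  have c4: "\<forall>x\<in>P. \<forall>y\<in>P. tensor_mult x y \<in> P"
  proof (intro ballI)
    fix x y assume "x \<in> P" "y \<in> P"
    then have x: "x \<in> free_tensors m" "pos m (phi x)" and y: "y \<in> free_tensors m" "pos m (phi y)"
      by (auto simp: Pi)
    show "tensor_mult x y \<in> P" using pos_mult[OF x(1) y(1) x(2) y(2)] ft_tm[OF x(1) y(1)] by (simp add: Pi)
  qed
  have c5: "\<forall>us. length us = m \<and> set us \<subseteq> puiseux_pos \<longrightarrow> simple_tensor us \<in> P"
  proof (intro allI impI, elim conjE)
    fix us :: "(rat \<Rightarrow> real) list" assume l: "length us = m" and s: "set us \<subseteq> puiseux_pos"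
    have sp: "set us \<subseteq> puiseux" using s by (auto simp: puiseux_pos_def)
    have "pos m (ev us)" using pos_simple[OF s] l by simp
    then have "pos m (phi (simple_tensor us))" by (rule pos_cong) (simp add: phi_simple)
    then show "simple_tensor us \<in> P" using ft_simple[OF l sp] by (simp add: Pi)
  qed
  have "P \<subseteq> free_tensors m" by (auto simp: P_def)
  then show ?thesis using c1 c2 c3 c4 c5 by blast
qed

end
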